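(* Let $n \geq 8$ be an integer. Then the class $\mathcal{Q}$ of functions on $\mathbb{R}^n$ (defined in the context) is empty. That is, there is no function $Q:\mathbb{R}^n\to\mathbb{R}$ of the form $Q(x)=x^TMx$ such that (a) $M\in\mathbb{R}^{n\times n}$ is nonzero, symmetric and nonnegative definite; (b) $Q(Ax)\le Q(x)$ for every $A\in\mathcal{A}$ and every $x\in\mathbb{R}^n$; and (c) $Q(\mathbf{e})=0$.
   Context: Fix a positive integer $n$. Let $\mathbf{e}\in\mathbb{R}^n$ be the vector with all components equal to $1$. A square matrix is stochastic if it is entrywise nonnegative and each row sums to $1$. Let $\mathcal{A}\subset\mathbb{R}^{n\times n}$ be the set of stochastic matrices $A=(a_{ij})$ such that: (i) $a_{ii}>0$ for all $i$; (ii) all positive entries in any given row of $A$ are equal; (iii) $a_{ij}>0$ if and only if $a_{ji}>0$; (iv) the graph on vertex set $\{1,\dots,n\}$ with edge set $\{(i,j): a_{ij}>0\}$ is connected. (These are exactly the matrices of one iteration $x\mapsto Ax$ of the equal-neighbor averaging algorithm on a symmetric connected graph with self-loops, where each node replaces its value by the unweighted average of its neighbors' values, including its own.) The class $\mathcal{Q}$ consists of all functions $Q:\mathbb{R}^n\to\mathbb{R}$ of the form $Q(x)=x^TMx$ where (a) $M$ is nonzero, symmetric and nonnegative definite; (b) $Q(Ax)\le Q(x)$ for all $A\in\mathcal{A}$ and $x\in\mathbb{R}^n$; (c) $Q(\mathbf{e})=0$. *)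

theory Defs
  imports "HOL-Analysis.Analysis"
begin

definition stochastic :: "real^'n^'n \<Rightarrow> bool" where
  "stochastic A \<longleftrightarrow> (\<forall>i j. A $ i $ j \<ge> 0) \<and> (\<forall>i. (\<Sum>j\<in>UNIV. A $ i $ j) = 1)"

definition graph_edges :: "real^'n^'n \<Rightarrow> ('n \<times> 'n) set" where
  "graph_edges A = {(i,j). A $ i $ j > 0}"

definition equal_neighbor_matrices :: "(real^'n^'n) set" where
  "equal_neighbor_matrices = {A. stochastic A
      \<and> (\<forall>i. A $ i $ i > 0)
      \<and> (\<forall>i j k. A $ i $ j > 0 \<longrightarrow> A $ i $ k > 0 \<longrightarrow> A $ i $ j = A $ i $ k)
      \<and> (\<forall>i j. A $ i $ j > 0 \<longleftrightarrow> A $ j $ i > 0)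
      \<and> (\<forall>i j. (i, j) \<in> (graph_edges A)\<^sup>*)}"

definition quad :: "real^'n^'n \<Rightarrow> real^'n \<Rightarrow> real" where
  "quad M x = x \<bullet> (M *v x)"

definition Q_class :: "(real^'n \<Rightarrow> real) set" where
  "Q_class = {Q. \<exists>M :: real^'n^'n.
      Q = quad M
      \<and> M \<noteq> 0 \<and> transpose M = M \<and> (\<forall>x. quad M x \<ge> 0)
      \<and> (\<forall>A\<in>equal_neighbor_matrices. \<forall>x. Q (A *v x) \<le> Q x)
      \<and> Q (\<chi> i. 1) = 0}"

end

theory Submission
  imports Defs
begin


definition bil :: "real^'n^'n \<Rightarrow> real^'n \<Rightarrow> real^'n \<Rightarrow> real" where
  "bil M x y = (\<Sum>i\<in>UNIV. \<Sum>j\<in>UNIV. M$i$j * x$i * y$j)"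

lemma quad_expand: "quad M x = bil M x x"
  unfolding quad_def inner_vec_def matrix_vector_mult_def bil_def
  by (simp add: sum_distrib_left mult_ac)

lemma quad_add: "quad M (x + t *\<^sub>R y) = quad M x + t * (bil M x y + bil M y x) + t^2 * quad M y"
  unfolding quad_expand bil_def
  by (simp add: sum.distrib sum_distrib_left algebra_simps power2_eq_square)

lemma bil_axis: "bil M (axis k 1) (axis l 1) = M$k$l"
proof -
  have "\<And>i j. M$i$j * axis k 1$i * axis l 1$j = (if i = k then (if j = l then M$k$l else 0) else 0)"
    by (simp add: axis_def)
  then have "bil M (axis k 1) (axis l 1) = (\<Sum>i\<in>UNIV. if i = k then (\<Sum>j\<in>UNIV. if j = l then M$k$l else 0) else 0)"
    unfolding bil_def by (intro sum.cong) auto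
  then show ?thesis by simp
qed

lemma bil_axis_left: "bil M (axis k 1) y = (M *v y)$k"
proof -
  have "\<And>i j. M$i$j * axis k 1$i * y$j = (if i = k then M$k$j * y$j else 0)"
    by (simp add: axis_def)
  then have "bil M (axis k 1) y = (\<Sum>i\<in>UNIV. if i = k then (\<Sum>j\<in>UNIV. M$k$j * y$j) else 0)"
    unfolding bil_def by (intro sum.cong) auto
  then show ?thesis unfolding matrix_vector_mult_def by simp
qed

lemma sym_entry: "transpose M = M \<Longrightarrow> M$l$k = M$k$l"
  by (metis transpose_def vec_lambda_beta)

lemma bil_sym: "transpose M = M \<Longrightarrow> bil M x y = bil M y x"
  unfolding bil_def
  apply (subst sum.swap)
  apply (intro sum.cong refl)
  by (simp add: sym_entry mult_ac)

lemma quad_axis: "quad M (axis k 1) = M$k$k"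
  by (simp add: quad_expand bil_axis)

lemma psd_diag: "\<forall>x. quad M x \<ge> 0 \<Longrightarrow> M$k$k \<ge> 0"
  by (metis quad_axis)

lemma psd_zero_diag:
  assumes psd: "\<forall>x. quad M x \<ge> 0" and sym: "transpose M = M" and d: "\<forall>k. M$k$k = 0"
  shows "M = 0"
proof -
  have "M$k$l = 0" for k l
  proof -
    have q: "quad M (axis k 1 + t *\<^sub>R axis l 1) = 2 * t * M$k$l" for t
      using d sym_entry[OF sym] by (simp add: quad_add quad_axis bil_axis)
    have "0 \<le> 2 * 1 * M$k$l" using psd q[of 1] by metis
    moreover have "0 \<le> 2 * (-1) * M$k$l" using psd q[of "-1"] by metis
    ultimately show ?thesis by simp
  qed
  then show ?thesis by (simp add: vec_eq_iff)
qed

lemma psd_kernel: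
  assumes psd: "\<forall>x. quad M x \<ge> 0" and sym: "transpose M = M" and z: "quad M e = 0"
  shows "(M *v e)$k = 0"
proof -
  define a where "a = bil M e (axis k 1)"
  define b where "b = quad M (axis k 1)"
  have b0: "b \<ge> 0" using psd b_def by auto
  have q: "quad M (e + t *\<^sub>R axis k 1) = 2 * t * a + t^2 * b" for t
    using z bil_sym[OF sym] by (simp add: quad_add a_def b_def)
  define t where "t = - a / (b + 1)"
  have "0 \<le> 2 * t * a + t^2 * b" using psd q by metis
  hence "0 \<le> (2 * t * a + t^2 * b) * (b+1)^2" using b0 by simp
  have tb: "t * (b+1) = - a" using b0 by (simp add: t_def)
  have "(2 * t * a + t^2 * b) * (b+1)^2 = 2*a*(t*(b+1))*(b+1) + b*(t*(b+1))^2"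
    by (simp add: power2_eq_square algebra_simps)
  also have "\<dots> = - (a\<^sup>2 * (b + 2))" unfolding tb by (simp add: power2_eq_square algebra_simps)
  finally have "0 \<le> - (a\<^sup>2 * (b + 2))" using \<open>0 \<le> (2 * t * a + t^2 * b) * (b+1)^2\<close> by simp
  then have "a = 0" using b0
    by (smt (verit, best) mult_nonneg_nonneg mult_pos_pos zero_less_power2)
  moreover have "a = (M *v e)$k"
    unfolding a_def by (metis bil_sym[OF sym] bil_axis_left)
  ultimately show ?thesis by simp
qed



definition Pv :: "('n \<Rightarrow> 'n) \<Rightarrow> real^'n \<Rightarrow> real^'n" where
  "Pv p x = (\<chi> i. x$(p i))"
definition Pm :: "('n \<Rightarrow> 'n) \<Rightarrow> real^'n^'n \<Rightarrow> real^'n^'n" where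
  "Pm p A = (\<chi> i j. A$(p i)$(p j))"

lemma Pv_mult: assumes "p permutes (UNIV::'n::finite set)"
  shows "Pv p (A *v x) = Pm p A *v Pv p (x::real^'n)"
proof -
  have "(\<Sum>j\<in>UNIV. A$(p i)$j * x$j) = (\<Sum>j\<in>UNIV. A$(p i)$(p j) * x$(p j))" for i
    using sum.permute[OF assms, of "\<lambda>j. A$(p i)$j * x$j"] by (simp add: o_def)
  then show ?thesis unfolding Pv_def Pm_def matrix_vector_mult_def by (simp add: vec_eq_iff)
qed

lemma Pm_enm: assumes p: "p permutes (UNIV::'n::finite set)"
  and A: "A \<in> (equal_neighbor_matrices :: (real^'n^'n) set)"
  shows "Pm p A \<in> equal_neighbor_matrices"
proof -
  have st: "stochastic A" and d: "\<forall>i. A $ i $ i > 0"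
    and eq: "\<forall>i j k. A $ i $ j > 0 \<longrightarrow> A $ i $ k > 0 \<longrightarrow> A $ i $ j = A $ i $ k"
    and sy: "\<forall>i j. A $ i $ j > 0 \<longleftrightarrow> A $ j $ i > 0"
    and con: "\<forall>i j. (i, j) \<in> (graph_edges A)\<^sup>*"
    using A unfolding equal_neighbor_matrices_def by auto
  have rs: "(\<Sum>j\<in>UNIV. A$(p i)$(p j)) = 1" for i
    using sum.permute[OF p, of "\<lambda>j. A$(p i)$j"] st unfolding stochastic_def by (simp add: o_def)
  have st': "stochastic (Pm p A)"
    using st rs unfolding stochastic_def Pm_def by simp
  have path: "(a, b) \<in> (graph_edges A)\<^sup>* \<Longrightarrow> (inv p a, inv p b) \<in> (graph_edges (Pm p A))\<^sup>*" for a b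
  proof (induction rule: rtrancl_induct)
    case base then show ?case by simp
  next
    case (step y z)
    have "(inv p y, inv p z) \<in> graph_edges (Pm p A)"
      using step(2) unfolding graph_edges_def Pm_def by (simp add: permutes_inverses[OF p])
    then show ?case using step(3) by (meson rtrancl.rtrancl_into_rtrancl)
  qed
  have con': "(i, j) \<in> (graph_edges (Pm p A))\<^sup>*" for i j
    using path[of "p i" "p j"] con by (simp add: permutes_inverses[OF p])
  show ?thesis unfolding equal_neighbor_matrices_def
    using st' d eq sy con' by (simp add: Pm_def)
qed



definition Wm :: "real^'n^'n \<Rightarrow> 'n::finite \<Rightarrow> 'n \<Rightarrow> real" where
  "Wm M i j = (\<Sum>p\<in>{p. p permutes (UNIV::'n set)}. M$(p i)$(p j))"

lemma G_expand: "(\<Sum>p\<in>{p. p permutes (UNIV::'n::finite set)}. quad M (Pv p y))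
   = (\<Sum>i\<in>UNIV. \<Sum>j\<in>UNIV. Wm M i j * y$i * y$j)"
proof -
  have "(\<Sum>p\<in>{p. p permutes (UNIV::'n set)}. quad M (Pv p y))
      = (\<Sum>p\<in>{p. p permutes (UNIV::'n set)}. \<Sum>i\<in>UNIV. \<Sum>j\<in>UNIV. M$(inv p i)$(inv p j) * y$i * y$j)"
  proof (intro sum.cong refl)
    fix p assume "p \<in> {p. p permutes (UNIV::'n set)}"
    hence p: "p permutes (UNIV::'n set)" by simp
    have ip: "inv p permutes (UNIV::'n set)" using permutes_inv[OF p] .
    have "quad M (Pv p y) = (\<Sum>i\<in>UNIV. \<Sum>j\<in>UNIV. M$i$j * y$(p i) * y$(p j))"
      unfolding quad_expand bil_def Pv_def by simp
    also have "\<dots> = (\<Sum>i\<in>UNIV. \<Sum>j\<in>UNIV. M$(inv p i)$j * y$i * y$(p j))"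
      using sum.permute[OF ip, of "\<lambda>i. \<Sum>j\<in>UNIV. M$i$j * y$(p i) * y$(p j)"]
      by (simp add: o_def permutes_inverses[OF p])
    also have "\<dots> = (\<Sum>i\<in>UNIV. \<Sum>j\<in>UNIV. M$(inv p i)$(inv p j) * y$i * y$j)"
    proof (rule sum.cong[OF refl])
      fix i show "(\<Sum>j\<in>UNIV. M$(inv p i)$j * y$i * y$(p j)) = (\<Sum>j\<in>UNIV. M$(inv p i)$(inv p j) * y$i * y$j)"
        using sum.permute[OF ip, of "\<lambda>j. M$(inv p i)$j * y$i * y$(p j)"]
        by (simp add: o_def permutes_inverses[OF p])
    qed
    finally show "quad M (Pv p y) = (\<Sum>i\<in>UNIV. \<Sum>j\<in>UNIV. M$(inv p i)$(inv p j) * y$i * y$j)" .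
  qed
  also have "\<dots> = (\<Sum>p\<in>{p. p permutes (UNIV::'n set)}. \<Sum>i\<in>UNIV. \<Sum>j\<in>UNIV. M$(p i)$(p j) * y$i * y$j)"
    by (rule sum_permutations_inverse[symmetric])
  also have "\<dots> = (\<Sum>i\<in>UNIV. \<Sum>j\<in>UNIV. Wm M i j * y$i * y$j)"
    unfolding Wm_def
  proof -
    have "(\<Sum>p\<in>{p. p permutes (UNIV::'n set)}. \<Sum>i\<in>UNIV. \<Sum>j\<in>UNIV. M$(p i)$(p j) * y$i * y$j)
       = (\<Sum>i\<in>UNIV. \<Sum>p\<in>{p. p permutes (UNIV::'n set)}. \<Sum>j\<in>UNIV. M$(p i)$(p j) * y$i * y$j)"
      by (rule sum.swap)
    also have "\<dots> = (\<Sum>i\<in>UNIV. \<Sum>j\<in>UNIV. \<Sum>p\<in>{p. p permutes (UNIV::'n set)}. M$(p i)$(p j) * y$i * y$j)"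
      by (rule sum.cong[OF refl]) (rule sum.swap)
    also have "\<dots> = (\<Sum>i\<in>UNIV. \<Sum>j\<in>UNIV. (\<Sum>p\<in>{p. p permutes (UNIV::'n set)}. M$(p i)$(p j)) * y$i * y$j)"
      by (simp add: sum_distrib_right)
    finally show "(\<Sum>p\<in>{p. p permutes (UNIV::'n set)}. \<Sum>i\<in>UNIV. \<Sum>j\<in>UNIV. M$(p i)$(p j) * y$i * y$j)
       = (\<Sum>i\<in>UNIV. \<Sum>j\<in>UNIV. (\<Sum>p\<in>{p. p permutes (UNIV::'n set)}. M$(p i)$(p j)) * y$i * y$j)" .
  qed
  finally show ?thesis .
qed

lemma exists_perm2:
  fixes i j k l :: "'n::finite"
  assumes "i \<noteq> j" "k \<noteq> l"
  shows "\<exists>s. s permutes (UNIV::'n set) \<and> s k = i \<and> s l = j"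
proof -
  define t1 where "t1 = Transposition.transpose k i"
  define l' where "l' = t1 l"
  define t2 where "t2 = Transposition.transpose l' j"
  have "i \<noteq> l'" using assms unfolding l'_def t1_def by (auto simp: Transposition.transpose_def)
  then have "(t2 \<circ> t1) k = i \<and> (t2 \<circ> t1) l = j"
    using assms unfolding t2_def t1_def l'_def by (auto simp: Transposition.transpose_def)
  moreover have "(t2 \<circ> t1) permutes (UNIV::'n set)"
    unfolding t1_def t2_def by (intro permutes_compose permutes_swap_id) auto
  ultimately show ?thesis by blast
qed

lemma Wm_perm:
  assumes s: "s permutes (UNIV::'n::finite set)"
  shows "Wm M (s k) (s l) = Wm M k l"
  unfolding Wm_def
  using sum_permutations_compose_right[OF s, of "\<lambda>p. M$(p k)$(p l)"] by (simp add: o_def)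

lemma Wm_diag: "Wm M (k::'n::finite) k = Wm M i i"
proof -
  have s: "Transposition.transpose k i permutes (UNIV::'n set)" by (intro permutes_swap_id) auto
  show ?thesis using Wm_perm[OF s, of M k k] by simp
qed

lemma Wm_off: "i \<noteq> j \<Longrightarrow> k \<noteq> l \<Longrightarrow> Wm M (k::'n::finite) l = Wm M i j"
  using exists_perm2[of i j k l] Wm_perm by metis

lemma Wm_row:
  assumes "\<forall>k. (\<Sum>j\<in>UNIV. M$k$j) = 0"
  shows "(\<Sum>j\<in>UNIV. Wm M (i::'n::finite) j) = 0"
proof -
  have "(\<Sum>j\<in>UNIV. Wm M i j) = (\<Sum>p\<in>{p. p permutes (UNIV::'n set)}. \<Sum>j\<in>UNIV. M$(p i)$(p j))"
    unfolding Wm_def by (rule sum.swap)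
  also have "\<dots> = (\<Sum>p\<in>{p. p permutes (UNIV::'n set)}. 0)"
  proof (intro sum.cong refl)
    fix p assume "p \<in> {p. p permutes (UNIV::'n set)}"
    hence p: "p permutes (UNIV::'n set)" by simp
    show "(\<Sum>j\<in>UNIV. M$(p i)$(p j)) = 0"
      using sum.permute[OF p, of "\<lambda>j. M$(p i)$j"] assms by (simp add: o_def)
  qed
  finally show ?thesis by simp
qed

lemma G_formula:
  fixes M :: "real^'n^'n" and i0 j0 :: "'n::finite"
  assumes rows: "\<forall>k. (\<Sum>j\<in>UNIV. M$k$j) = 0" and ij: "i0 \<noteq> j0"
  shows "(real CARD('n) - 1) * (\<Sum>p\<in>{p. p permutes (UNIV::'n set)}. quad M (Pv p y))
     = Wm M i0 i0 * (real CARD('n) * (\<Sum>i\<in>UNIV. (y$i)^2) - (\<Sum>i\<in>UNIV. y$i)^2)"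
proof -
  define d where "d = Wm M i0 i0"
  define w where "w = Wm M i0 j0"
  define S1 where "S1 = (\<Sum>i\<in>UNIV. y$i)"
  define S2 where "S2 = (\<Sum>i\<in>UNIV. (y$i)^2)"
  have W: "Wm M i j = (if i = j then d else w)" for i j
    unfolding d_def w_def using Wm_diag Wm_off ij by metis
  have inner: "(\<Sum>j\<in>UNIV. (if i = j then d else w) * y$i * y$j) = w * y$i * S1 + (d - w) * (y$i)^2" for i
  proof -
    have "(\<Sum>j\<in>UNIV. (if i = j then d else w) * y$i * y$j)
        = (\<Sum>j\<in>UNIV. w * y$i * y$j + (if i = j then (d - w) * y$i * y$j else 0))"
      by (intro sum.cong refl) (auto simp: algebra_simps)
    also have "\<dots> = w * y$i * S1 + (d - w) * (y$i)^2"
      by (simp add: sum.distrib sum_distrib_left S1_def power2_eq_square mult_ac)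
    finally show ?thesis .
  qed
  have G: "(\<Sum>p\<in>{p. p permutes (UNIV::'n set)}. quad M (Pv p y)) = w * S1^2 + (d - w) * S2"
  proof -
    have "(\<Sum>p\<in>{p. p permutes (UNIV::'n set)}. quad M (Pv p y))
        = (\<Sum>i\<in>UNIV. w * S1 * y$i + (d - w) * (y$i)^2)"
      unfolding G_expand W inner by (simp add: mult_ac)
    also have "\<dots> = w * S1 * S1 + (d - w) * S2"
      by (simp add: sum.distrib sum_distrib_left[symmetric] S1_def S2_def)
    finally show ?thesis by (simp add: power2_eq_square)
  qed
  have "0 = (\<Sum>j\<in>UNIV. Wm M i0 j)" using Wm_row[OF rows] by simp
  also have "\<dots> = d + (\<Sum>j\<in>UNIV - {i0}. Wm M i0 j)"
    by (simp add: sum.remove[of UNIV i0] d_def)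
  also have "(\<Sum>j\<in>UNIV - {i0}. Wm M i0 j) = (\<Sum>j\<in>UNIV - {i0}. w)"
    by (intro sum.cong refl) (auto simp: W)
  also have "\<dots> = (real CARD('n) - 1) * w" by (simp add: card_Diff_singleton of_nat_diff)
  finally have dw: "d + (real CARD('n) - 1) * w = 0" by simp
  show ?thesis unfolding G d_def[symmetric] S1_def[symmetric] S2_def[symmetric]
  proof -
    have dd: "d = - (real CARD('n) - 1) * w" using dw by linarith
    show "(real CARD('n) - 1) * (w * S1\<^sup>2 + (d - w) * S2) = d * (real CARD('n) * S2 - S1\<^sup>2)"
      unfolding dd by (simp add: algebra_simps)
  qed
qed



definition Fv :: "real^'n::finite \<Rightarrow> real" where
  "Fv y = real CARD('n) * (\<Sum>i\<in>UNIV. (y$i)^2) - (\<Sum>i\<in>UNIV. y$i)^2"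

lemma two_elems: assumes "CARD('n::finite) \<ge> 2" shows "\<exists>a b::'n. a \<noteq> b"
proof (rule ccontr)
  assume "\<not> ?thesis"
  then have "UNIV \<subseteq> {undefined::'n}" by auto
  then have "CARD('n) \<le> 1" using card_mono[of "{undefined::'n}" UNIV] by simp
  then show False using assms by simp
qed

lemma reduction:
  assumes n2: "CARD('n::finite) \<ge> 2" and Q: "Q \<in> (Q_class :: (real^'n \<Rightarrow> real) set)"
  shows "\<forall>A\<in>(equal_neighbor_matrices :: (real^'n^'n) set). \<forall>x. Fv (A *v x) \<le> Fv x"
proof -
  obtain M :: "real^'n^'n" where QM: "Q = quad M" and M0: "M \<noteq> 0" and sym: "transpose M = M"
    and psd: "\<forall>x. quad M x \<ge> 0"
    and dec: "\<forall>A\<in>equal_neighbor_matrices. \<forall>x. Q (A *v x) \<le> Q x"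
    and Qe: "Q (\<chi> i. 1) = 0"
    using Q unfolding Q_class_def by blast
  obtain i0 j0 :: 'n where ij: "i0 \<noteq> j0" using two_elems[OF n2] by blast
  have rows: "\<forall>k. (\<Sum>j\<in>UNIV. M$k$j) = 0"
  proof
    fix k
    have "(M *v (\<chi> i. 1))$k = 0" using psd_kernel[OF psd sym] Qe QM by simp
    then show "(\<Sum>j\<in>UNIV. M$k$j) = 0" by (simp add: matrix_vector_mult_def)
  qed
  define d where "d = Wm M i0 i0"
  have fin: "finite {p. p permutes (UNIV::'n set)}" by (simp add: finite_permutations)
  have d0: "d \<ge> 0" unfolding d_def Wm_def by (intro sum_nonneg) (simp add: psd_diag[OF psd])
  have dpos: "d > 0"
  proof (rule ccontr)
    assume "\<not> d > 0"
    hence "d = 0" using d0 by simp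
    hence all0: "\<forall>p\<in>{p. p permutes (UNIV::'n set)}. M$(p i0)$(p i0) = 0"
    proof -
      have "(\<Sum>p\<in>{p. p permutes (UNIV::'n set)}. M$(p i0)$(p i0)) = 0"
        using \<open>d = 0\<close> unfolding d_def Wm_def .
      moreover have "\<forall>p\<in>{p. p permutes (UNIV::'n set)}. 0 \<le> M$(p i0)$(p i0)"
        using psd_diag[OF psd] by simp
      ultimately show ?thesis using sum_nonneg_eq_0_iff[OF fin, of "\<lambda>p. M$(p i0)$(p i0)"] by blast
    qed
    have "M$k$k = 0" for k
    proof -
      have tp: "Transposition.transpose i0 k permutes (UNIV::'n set)" by (intro permutes_swap_id) auto
      have "M$(Transposition.transpose i0 k i0)$(Transposition.transpose i0 k i0) = 0"
        using all0 tp by blast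
      then show ?thesis by simp
    qed
    then have "M = 0" using psd_zero_diag[OF psd sym] by blast
    then show False using M0 by simp
  qed
  show ?thesis
  proof (intro ballI allI)
    fix A :: "real^'n^'n" and x assume A: "A \<in> equal_neighbor_matrices"
    have "(\<Sum>p\<in>{p. p permutes (UNIV::'n set)}. quad M (Pv p (A *v x)))
       \<le> (\<Sum>p\<in>{p. p permutes (UNIV::'n set)}. quad M (Pv p x))"
    proof (rule sum_mono)
      fix p assume "p \<in> {p. p permutes (UNIV::'n set)}"
      hence p: "p permutes (UNIV::'n set)" by simp
      show "quad M (Pv p (A *v x)) \<le> quad M (Pv p x)"
        unfolding Pv_mult[OF p] using dec Pm_enm[OF p A] QM by simp
    qed
    hence "(real CARD('n) - 1) * (\<Sum>p\<in>{p. p permutes (UNIV::'n set)}. quad M (Pv p (A *v x)))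
       \<le> (real CARD('n) - 1) * (\<Sum>p\<in>{p. p permutes (UNIV::'n set)}. quad M (Pv p x))"
      using n2 by (intro mult_left_mono) auto
    hence "d * Fv (A *v x) \<le> d * Fv x"
      unfolding G_formula[OF rows ij] d_def Fv_def .
    then show "Fv (A *v x) \<le> Fv x" using dpos by simp
  qed
qed



definition Nmat :: "('n::finite \<Rightarrow> 'n set) \<Rightarrow> real^'n^'n" where
  "Nmat N = (\<chi> i j. if j \<in> N i then 1 / real (card (N i)) else 0)"

lemma sum_if_set: "(\<Sum>j\<in>(UNIV::'n::finite set). if j \<in> S then f j else 0) = (\<Sum>j\<in>S. f j)"
  using sum.inter_restrict[of "UNIV::'n set" f S] by simp

lemma Nmat_mult: "(Nmat N *v x)$i = (\<Sum>j\<in>N i. x$j) / real (card (N i))"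
proof -
  have "(Nmat N *v x)$i = (\<Sum>j\<in>UNIV. if j \<in> N i then x$j / real (card (N i)) else 0)"
    unfolding Nmat_def matrix_vector_mult_def by (simp, intro sum.cong refl) auto
  also have "\<dots> = (\<Sum>j\<in>N i. x$j / real (card (N i)))" by (rule sum_if_set)
  finally show ?thesis by (simp add: sum_divide_distrib)
qed

lemma Nmat_enm:
  fixes N :: "'n::finite \<Rightarrow> 'n set"
  assumes refl: "\<forall>i. i \<in> N i" and sym: "\<forall>i j. j \<in> N i \<longleftrightarrow> i \<in> N j"
    and conn: "\<forall>i j. (i,j) \<in> {(a,b). b \<in> N a}\<^sup>*"
  shows "Nmat N \<in> equal_neighbor_matrices"
proof -
  have cpos: "card (N i) > 0" for i using refl by (metis card_gt_0_iff empty_iff finite)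
  have pos: "Nmat N $ i $ j > 0 \<longleftrightarrow> j \<in> N i" for i j
    using cpos[of i] unfolding Nmat_def by simp
  have rs: "(\<Sum>j\<in>UNIV. Nmat N $ i $ j) = 1" for i
  proof -
    have "(\<Sum>j\<in>UNIV. Nmat N $ i $ j) = (\<Sum>j\<in>UNIV. if j \<in> N i then 1 / real (card (N i)) else 0)"
      unfolding Nmat_def by simp
    also have "\<dots> = (\<Sum>j\<in>N i. 1 / real (card (N i)))" by (rule sum_if_set)
    also have "\<dots> = 1" using cpos[of i] refl by auto
    finally show ?thesis .
  qed
  have st: "stochastic (Nmat N)" unfolding stochastic_def using rs by (simp add: Nmat_def)
  have ge: "graph_edges (Nmat N) = {(a,b). b \<in> N a}" unfolding graph_edges_def using pos by auto
  show ?thesis unfolding equal_neighbor_matrices_def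
  proof (intro CollectI conjI allI impI)
    show "stochastic (Nmat N)" by (rule st)
    show "0 < Nmat N $ i $ i" for i using pos refl by blast
    show "Nmat N $ i $ j = Nmat N $ i $ k" if "0 < Nmat N $ i $ j" "0 < Nmat N $ i $ k" for i j k
      using that pos unfolding Nmat_def by simp
    show "(0 < Nmat N $ i $ j) = (0 < Nmat N $ j $ i)" for i j using pos sym by blast
    show "(i, j) \<in> (graph_edges (Nmat N))\<^sup>*" for i j using conn ge by simp
  qed
qed



lemma arith_ex:
  fixes nn c :: real
  assumes n8: "nn \<ge> 8" and c: "c = (6 + 6*(nn-5)) / (nn - 3)"
  shows "nn * (146 + 36*(nn-5)) - (6 + 6*(nn-5))^2
       < nn * (3*(25/4) + 36/25 + c^2 + (nn-5)*(289/4)) - (-15/2 + 6/5 + c + (nn-5)*(17/2))^2"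
proof -
  define m where "m = nn - 8"
  have m0: "m \<ge> 0" using n8 m_def by simp
  have nn: "nn = m + 8" using m_def by simp
  have c': "c = (6*m + 24) / (m + 5)" unfolding c nn by (simp add: algebra_simps)
  have pos: "m + 5 > 0" using m0 by simp
  have k: "c * (m + 5) = 6*m + 24" unfolding c' using pos by simp
  define E where "E = (nn * (3*(25/4) + 36/25 + c^2 + (nn-5)*(289/4)) - (-15/2 + 6/5 + c + (nn-5)*(17/2))^2
        - (nn * (146 + 36*(nn-5)) - (6 + 6*(nn-5))^2))"
  have "E * (m+5)^2 = (nn - 1) * (c*(m+5))^2 - 2 * (-15/2 + 6/5 + (nn-5)*(17/2)) * (c*(m+5)) * (m+5)
     + (nn * (3*(25/4) + 36/25 + (nn-5)*(289/4)) - (-15/2 + 6/5 + (nn-5)*(17/2))^2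
        - (nn * (146 + 36*(nn-5)) - (6 + 6*(nn-5))^2)) * (m+5)^2"
    unfolding E_def power2_eq_square by algebra
  also have "\<dots> = 1196 + 50507/10 * m + 45197/25 * m^2 + 8427/50 * m^3"
    unfolding k nn power2_eq_square power3_eq_cube by algebra
  finally have "E * (m+5)^2 = 1196 + 50507/10 * m + 45197/25 * m^2 + 8427/50 * m^3" .
  moreover have "1196 + 50507/10 * m + 45197/25 * m^2 + 8427/50 * m^3 > 0"
    using m0 by (simp add: add_pos_nonneg)
  ultimately have "E * (m+5)^2 > 0" by simp
  then have "E > 0" using pos by (simp add: zero_less_mult_iff)
  then show ?thesis unfolding E_def by simp
qed



lemma five_elems:
  assumes "CARD('n::finite) \<ge> 8"
  shows "\<exists>u1 u2 u3 h1 h2::'n. distinct [u1,u2,u3,h1,h2]"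
proof -
  obtain xs :: "'n list" where xs: "set xs = UNIV" "distinct xs"
    using finite_distinct_list[of "UNIV::'n set"] by auto
  have len: "length xs \<ge> 8" using distinct_card[OF xs(2)] xs(1) assms by simp
  define ys where "ys = take 5 xs"
  have ly: "length ys = Suc (Suc (Suc (Suc (Suc 0))))" using len unfolding ys_def by simp
  have dy: "distinct ys" using xs(2) unfolding ys_def by simp
  from ly obtain a b c d e where "ys = [a,b,c,d,e]" by (auto simp: length_Suc_conv)
  with dy have "distinct [a,b,c,d,e]" by simp
  then show ?thesis by blast
qed

lemma counterexample:
  assumes n8: "CARD('n::finite) \<ge> 8"
  shows "\<exists>A\<in>(equal_neighbor_matrices :: (real^'n^'n) set). \<exists>x. Fv (A *v x) > Fv x"
proof -
  obtain u1 u2 u3 h1 h2 :: 'n where dist: "distinct [u1,u2,u3,h1,h2]"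
    using five_elems[OF n8] by blast
  define U where "U = {u1,u2,u3}"
  define B where "B = {u1,u2,u3,h1,h2}"
  define L where "L = UNIV - B"
  define N where "N i = (if i \<in> U then {i,h1} else if i = h1 then B
                          else if i = h2 then insert h1 (insert h2 L) else {i,h2})" for i
  have cB: "card B = 5" unfolding B_def using dist by simp
  have cL: "card L = CARD('n) - 5" unfolding L_def using cB by (simp add: card_Diff_subset)
  have refl: "\<forall>i. i \<in> N i" unfolding N_def B_def L_def by auto
  have sym: "\<forall>i j. j \<in> N i \<longleftrightarrow> i \<in> N j"
    unfolding N_def B_def L_def U_def using dist by auto
  let ?R = "{(a,b). b \<in> N a}"
  have toh2: "(i, h2) \<in> ?R\<^sup>*" for i
  proof -
    have h12: "(h1, h2) \<in> ?R" unfolding N_def B_def U_def using dist by auto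
    show ?thesis
    proof (cases "i \<in> U")
      case True
      then have "(i, h1) \<in> ?R" unfolding N_def by auto
      then show ?thesis using h12 by (meson converse_rtrancl_into_rtrancl r_into_rtrancl)
    next
      case False
      show ?thesis
      proof (cases "i = h1 \<or> i = h2")
        case True then show ?thesis using h12 by auto
      next
        case F2: False
        then have "(i, h2) \<in> ?R" using False unfolding N_def by auto
        then show ?thesis by auto
      qed
    qed
  qed
  have fromh2: "(h2, i) \<in> ?R\<^sup>*" for i
  proof -
    have "?R\<inverse> = ?R" using sym by auto
    then show ?thesis using toh2[of i] by (metis rtrancl_converseI)
  qed
  have conn: "\<forall>i j. (i,j) \<in> ?R\<^sup>*" using toh2 fromh2 by (meson rtrancl_trans)
  have Aenm: "Nmat N \<in> equal_neighbor_matrices" by (rule Nmat_enm[OF refl sym conn])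
  define x :: "real^'n" where "x = (\<chi> j. if j \<in> U then 0 else if j = h1 then -5 else if j = h2 then 11 else 6)"
  have xL: "x$j = 6" if "j \<in> L" for j using that dist unfolding x_def L_def B_def U_def by auto
  have xs: "x$u1 = 0" "x$u2 = 0" "x$u3 = 0" "x$h1 = -5" "x$h2 = 11"
    using dist unfolding x_def U_def by auto
  define nn where "nn = real CARD('n)"
  define c where "c = (6 + 6*(nn-5)) / (nn - 3)"
  have cL': "real (card L) = nn - 5" unfolding cL nn_def using n8 by (simp add: of_nat_diff)
  have sumU: "(\<Sum>j\<in>UNIV. f j) = f u1 + f u2 + f u3 + f h1 + f h2 + (\<Sum>j\<in>L. f j)" for f :: "'n \<Rightarrow> real"
  proof -
    have "(\<Sum>j\<in>UNIV. f j) = (\<Sum>j\<in>L. f j) + (\<Sum>j\<in>B. f j)"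
      unfolding L_def by (rule sum.subset_diff) auto
    moreover have "(\<Sum>j\<in>B. f j) = f u1 + f u2 + f u3 + f h1 + f h2"
      unfolding B_def using dist by simp
    ultimately show ?thesis by simp
  qed
  have sumL: "(\<Sum>j\<in>L. f j) = (nn - 5) * a" if "\<forall>j\<in>L. f j = a" for f :: "'n \<Rightarrow> real" and a
    using that cL' by simp
  define y where "y = Nmat N *v x"
  have yu: "y$u = -5/2" if "u \<in> U" for u
  proof -
    have "N u = {u, h1}" using that unfolding N_def by simp
    moreover have "u \<noteq> h1" "x$u = 0" using that dist unfolding U_def by (auto simp: xs)
    ultimately show ?thesis unfolding y_def Nmat_mult by (simp add: xs)
  qed
  have yh1: "y$h1 = 6/5"
  proof -
    have "N h1 = B" using dist unfolding N_def U_def by auto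
    then show ?thesis unfolding y_def Nmat_mult using dist cB by (simp add: B_def xs)
  qed
  have yh2: "y$h2 = c"
  proof -
    have "N h2 = insert h1 (insert h2 L)" using dist unfolding N_def U_def by auto
    moreover have "h1 \<notin> L" "h2 \<notin> L" "h1 \<noteq> h2" using dist unfolding L_def B_def by auto
    moreover have "finite L" by simp
    ultimately have "y$h2 = ((\<Sum>j\<in>L. x$j) + 6) / (real (card L) + 2)"
      unfolding y_def Nmat_mult by (simp add: xs algebra_simps)
    moreover have "(\<Sum>j\<in>L. x$j) = (nn - 5) * 6" using sumL xL by blast
    ultimately show ?thesis unfolding c_def using cL' by (simp add: algebra_simps)
  qed
  have ys: "y$u1 = -5/2" "y$u2 = -5/2" "y$u3 = -5/2" "y$h1 = 6/5" "y$h2 = c"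
    using yu yh1 yh2 unfolding U_def by auto
  have yL: "y$j = 17/2" if "j \<in> L" for j
  proof -
    have "j \<notin> U" "j \<noteq> h1" "j \<noteq> h2" using that unfolding L_def B_def U_def by auto
    then have "N j = {j, h2}" unfolding N_def by simp
    moreover have "x$j = 6" using xL that by simp
    ultimately show ?thesis unfolding y_def Nmat_mult using \<open>j \<noteq> h2\<close> by (simp add: xs)
  qed
  have Fx: "Fv x = nn * (146 + 36*(nn-5)) - (6 + 6*(nn-5))^2"
    unfolding Fv_def nn_def[symmetric] sumU
    by (simp add: xs sumL xL cL' power2_eq_square algebra_simps)
  have Fy: "Fv y = nn * (3*(25/4) + 36/25 + c^2 + (nn-5)*(289/4)) - (-15/2 + 6/5 + c + (nn-5)*(17/2))^2"
    unfolding Fv_def nn_def[symmetric] sumU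
    by (simp add: ys sumL yL cL' power2_eq_square algebra_simps)
  have "Fv x < Fv y" unfolding Fx Fy by (rule arith_ex) (use n8 nn_def c_def in auto)
  then show ?thesis using Aenm y_def by blast
qed


theorem theorem2:
  assumes "CARD('n::finite) \<ge> 8"
  shows "(Q_class :: (real^'n \<Rightarrow> real) set) = {}"
proof (rule ccontr)
  assume "Q_class \<noteq> ({} :: (real^'n \<Rightarrow> real) set)"
  then obtain Q where Q: "Q \<in> (Q_class :: (real^'n \<Rightarrow> real) set)" by blast
  have "CARD('n) \<ge> 2" using assms by simp
  then have R: "\<forall>A\<in>(equal_neighbor_matrices :: (real^'n^'n) set). \<forall>x. Fv (A *v x) \<le> Fv x"
    using reduction Q by blast
  obtain A :: "real^'n^'n" and x where "A \<in> equal_neighbor_matrices" "Fv x < Fv (A *v x)"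
    using counterexample[OF assms] by blast
  with R show False by (meson not_le)
qed

end
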